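(* Let $\alpha$ be a nonzero real number. Every closed $\alpha$-stationary curve in $\mathbb H^2$ (not passing through $N$) is a circle centered at $N$.
   Context: Let $\langle x,y\rangle_\epsilon=x_1y_1+x_2y_2-x_3y_3$ be the Lorentzian inner product on $\mathbb R^3$ and $|x|_\epsilon=\sqrt{|\langle x,x\rangle_\epsilon|}$. The hyperbolic plane is $\mathbb H^2=\{(x,y,z):x^2+y^2-z^2=-1,\ z>0\}$ with the induced metric. It is parametrized by $\Psi(u,v)=(\sinh u\cos v,\sinh u\sin v,\cosh u)$, and $N=(0,0,1)$. The hyperbolic distance from $\Psi(u,v)$ to $N$ is $u$. For a regular curve $\gamma(t)=\Psi(u(t),v(t))$ with $u>0$, the energy is $$E_\alpha[\gamma]=\int_\gamma\mathsf d^\alpha\,ds=\int u^\alpha\sqrt{u'^2+\sinh^2(u)v'^2}\,dt,$$ where $\mathsf d$ is the hyperbolic distance to $N$. The curve is $\alpha$-stationary if it is a critical point of $E_\alpha$ (i.e. $(u,v)$ satisfies the Euler–Lagrange equations). Equivalently, its geodesic curvature satisfies $\kappa=\alpha\langle\mathbf n,\xi\rangle_\epsilon/\mathsf d$. Here $\mathbf n$ is the unit normal and $\xi=\Psi_u$ is the unit tangent of the geodesic ray from $N$ through the point. Throughout the paper, $\alpha\ne0$ and curves avoid $N$. *)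

theory Defs
  imports "HOL-Analysis.Analysis"
begin

text \<open>Polar parametrization of the hyperboloid model of the hyperbolic plane:
  Psi u v = (sinh u cos v, sinh u sin v, cosh u); the distance to N = (0,0,1) is u.\<close>
definition Psi :: "real \<Rightarrow> real \<Rightarrow> real \<times> real \<times> real" where
  "Psi u v = (sinh u * cos v, sinh u * sin v, cosh u)"

text \<open>Speed squared of t \<mapsto> Psi (u t) (v t) in the induced metric.\<close>
definition speed2 :: "(real \<Rightarrow> real) \<Rightarrow> (real \<Rightarrow> real) \<Rightarrow> (real \<Rightarrow> real) \<Rightarrow> real \<Rightarrow> real" where
  "speed2 u u' v' t = (u' t)^2 + (sinh (u t))^2 * (v' t)^2"

definition regular_polar_curve ::
  "(real \<Rightarrow> real) \<Rightarrow> (real \<Rightarrow> real) \<Rightarrow> (real \<Rightarrow> real) \<Rightarrow> (real \<Rightarrow> real)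
   \<Rightarrow> (real \<Rightarrow> real) \<Rightarrow> (real \<Rightarrow> real) \<Rightarrow> bool" where
  "regular_polar_curve u v u' v' u'' v'' \<longleftrightarrow>
     (\<forall>t. (u has_real_derivative u' t) (at t) \<and> (v has_real_derivative v' t) (at t) \<and>
          (u' has_real_derivative u'' t) (at t) \<and> (v' has_real_derivative v'' t) (at t) \<and>
          u t > 0 \<and> speed2 u u' v' t > 0)"

text \<open>Euler--Lagrange equations of E_alpha with Lagrangian
  L(u,v,u',v') = u^alpha * sqrt(u'^2 + sinh(u)^2 v'^2):
  d/dt (dL/du') = dL/du  and  d/dt (dL/dv') = dL/dv = 0.\<close>
definition alpha_stationary ::
  "real \<Rightarrow> (real \<Rightarrow> real) \<Rightarrow> (real \<Rightarrow> real) \<Rightarrow> (real \<Rightarrow> real) \<Rightarrow> (real \<Rightarrow> real) \<Rightarrow> bool" where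
  "alpha_stationary \<alpha> u v u' v' \<longleftrightarrow>
     (\<forall>t.
       ((\<lambda>s. u s powr \<alpha> * u' s / sqrt (speed2 u u' v' s)) has_real_derivative
          (\<alpha> * u t powr (\<alpha> - 1) * sqrt (speed2 u u' v' t)
           + u t powr \<alpha> * sinh (u t) * cosh (u t) * (v' t)^2 / sqrt (speed2 u u' v' t))) (at t)
     \<and> ((\<lambda>s. u s powr \<alpha> * (sinh (u s))^2 * v' s / sqrt (speed2 u u' v' s)) has_real_derivative 0) (at t))"

definition closed_polar_curve :: "(real \<Rightarrow> real) \<Rightarrow> (real \<Rightarrow> real) \<Rightarrow> bool" where
  "closed_polar_curve u v \<longleftrightarrow>
     (\<exists>T>0. \<forall>t. Psi (u (t + T)) (v (t + T)) = Psi (u t) (v t))"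

end

theory Submission
  imports Defs
begin

lemma sc_gt: assumes "(r::real) > 0" shows "sinh r * cosh r > r"
proof -
  have d: "\<And>x. ((\<lambda>x. sinh x * cosh x - x) has_real_derivative (cosh x * cosh x + sinh x * sinh x - 1)) (at x)"
    by (auto intro!: derivative_eq_intros)
  obtain z where z: "0 < z" "z < r" "(sinh r * cosh r - r) - (sinh 0 * cosh 0 - 0) = (r - 0) * (cosh z * cosh z + sinh z * sinh z - 1)"
    using MVT2[OF assms, of "\<lambda>x. sinh x * cosh x - x", OF d] by blast
  have "cosh z * cosh z = sinh z * sinh z + 1" using cosh_square_eq[of z] by (simp add: power2_eq_square)
  moreover have "sinh z * sinh z > 0" using z by simp
  ultimately have e: "cosh z * cosh z + sinh z * sinh z - 1 = 2 * (sinh z * sinh z)" by simp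
  have "r * (2 * (sinh z * sinh z)) > 0" using assms \<open>sinh z * sinh z > 0\<close> by simp
  then show ?thesis using z(3) e by simp
qed

lemma k_mono: assumes "0 < (a::real)" "a < b" shows "a * cosh a / sinh a < b * cosh b / sinh b"
proof -
  have d: "\<And>x. a \<le> x \<Longrightarrow> ((\<lambda>x. x * cosh x / sinh x) has_real_derivative ((sinh x * cosh x - x) / (sinh x)^2)) (at x)"
  proof -
    fix x assume "a \<le> x" then have x: "x > 0" using assms by simp
    then have s: "sinh x \<noteq> 0" by (metis less_irrefl sinh_real_pos_iff)
    have "((\<lambda>x. x * cosh x / sinh x) has_real_derivative ((1 * cosh x + x * sinh x) * sinh x - x * cosh x * cosh x) / (sinh x * sinh x)) (at x)"
      using s by (auto intro!: derivative_eq_intros)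
    moreover have "((1 * cosh x + x * sinh x) * sinh x - x * cosh x * cosh x) = sinh x * cosh x - x"
      using cosh_square_eq[of x] by (simp add: power2_eq_square algebra_simps)
    ultimately show "((\<lambda>x. x * cosh x / sinh x) has_real_derivative ((sinh x * cosh x - x) / (sinh x)^2)) (at x)"
      by (simp add: power2_eq_square)
  qed
  obtain z where z: "a < z" "z < b" "b * cosh b / sinh b - a * cosh a / sinh a = (b - a) * ((sinh z * cosh z - z) / (sinh z)^2)"
    using MVT2[OF assms(2), of "\<lambda>x. x * cosh x / sinh x", OF d] by blast
  have "z > 0" using z assms by simp
  then have "(sinh z * cosh z - z) / (sinh z)^2 > 0" using sc_gt[of z] by simp
  moreover have "b - a > 0" using assms by simp
  ultimately have "(b - a) * ((sinh z * cosh z - z) / (sinh z)^2) > 0" by (rule mult_pos_pos[rotated])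
  then show ?thesis using z(3) by simp
qed

definition gg :: "real \<Rightarrow> real \<Rightarrow> real" where "gg al r = r powr al * sinh r"

lemma gg_deriv: assumes "r > 0"
  shows "(gg al has_real_derivative (r powr (al - 1) * (al * sinh r + r * cosh r))) (at r)"
proof -
  have "(gg al has_real_derivative (al * r powr (al - 1) * sinh r + r powr al * cosh r)) (at r)"
    unfolding gg_def [abs_def] using assms by (auto intro!: derivative_eq_intros)
  moreover have "r powr al = r powr (al - 1) * r" using assms by (simp add: powr_diff)
  ultimately show ?thesis by (simp add: algebra_simps)
qed

lemma gg_shape: assumes "0 < a" "a < b" "gg al a = gg al b"
  shows "\<exists>x. a < x \<and> x < b \<and> gg al x < gg al a"
proof -
  have dd: "\<And>x. a \<le> x \<Longrightarrow> x \<le> b \<Longrightarrow> (gg al has_real_derivative (x powr (al - 1) * (al * sinh x + x * cosh x))) (at x)"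
    using gg_deriv assms by simp
  obtain x where x: "a < x" "x < b" "gg al b - gg al a = (b - a) * (x powr (al - 1) * (al * sinh x + x * cosh x))"
    using MVT2[OF assms(2) dd] by blast
  have xp: "x > 0" using x assms by simp
  have "x powr (al - 1) > 0" using xp by simp
  moreover have "b - a \<noteq> 0" using assms by simp
  ultimately have e0: "al * sinh x + x * cosh x = 0" using x assms by simp
  have sx: "sinh x > 0" using xp by simp
  have al: "al = - (x * cosh x / sinh x)" using e0 sx by (simp add: field_simps add_eq_0_iff)
  have dd2: "\<And>y. a \<le> y \<Longrightarrow> y \<le> x \<Longrightarrow> (gg al has_real_derivative (y powr (al - 1) * (al * sinh y + y * cosh y))) (at y)"
    using gg_deriv assms by simp
  obtain y where y: "a < y" "y < x" "gg al x - gg al a = (x - a) * (y powr (al - 1) * (al * sinh y + y * cosh y))"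
    using MVT2[OF x(1) dd2] by blast
  have yp: "y > 0" using y assms by simp
  have sy: "sinh y > 0" using yp by simp
  have "y * cosh y / sinh y < x * cosh x / sinh x" using k_mono[OF yp y(2)] .
  then have "al + y * cosh y / sinh y < 0" using al by simp
  then have "(al + y * cosh y / sinh y) * sinh y < 0" using sy by (simp add: mult_neg_pos)
  then have "al * sinh y + y * cosh y < 0" using sy by (simp add: algebra_simps)
  moreover have "y powr (al - 1) > 0" using yp by simp
  ultimately have "y powr (al - 1) * (al * sinh y + y * cosh y) < 0" by (simp add: mult_pos_neg)
  moreover have "x - a > 0" using y by simp
  ultimately have "(x - a) * (y powr (al - 1) * (al * sinh y + y * cosh y)) < 0" by (simp add: mult_pos_neg)
  then have "gg al x < gg al a" using y(3) by simp
  then show ?thesis using x by blast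
qed

lemma C_bound:
  fixes U a b al :: real
  assumes U: "U > 0" and sp: "a^2 + (sinh U)^2 * b^2 > 0"
  shows "\<bar>U powr al * (sinh U)^2 * b / sqrt (a^2 + (sinh U)^2 * b^2)\<bar> \<le> gg al U"
    and "a = 0 \<Longrightarrow> \<bar>U powr al * (sinh U)^2 * b / sqrt (a^2 + (sinh U)^2 * b^2)\<bar> = gg al U"
proof -
  have s: "sinh U > 0" using U by simp
  have p: "U powr al > 0" using U by simp
  have q: "sqrt (a^2 + (sinh U)^2 * b^2) > 0" using sp by simp
  have r: "sinh U * \<bar>b\<bar> \<le> sqrt (a^2 + (sinh U)^2 * b^2)"
  proof -
    have "sinh U * \<bar>b\<bar> = sqrt ((sinh U)^2 * b^2)" using s by (simp add: real_sqrt_mult)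
    also have "\<dots> \<le> sqrt (a^2 + (sinh U)^2 * b^2)" by (intro real_sqrt_le_mono) simp
    finally show ?thesis .
  qed
  have num: "\<bar>U powr al * (sinh U)^2 * b\<bar> = U powr al * sinh U * (sinh U * \<bar>b\<bar>)"
    using s p by (simp add: abs_mult power2_eq_square)
  have ad: "\<bar>U powr al * (sinh U)^2 * b / sqrt (a^2 + (sinh U)^2 * b^2)\<bar>
      = \<bar>U powr al * (sinh U)^2 * b\<bar> / sqrt (a^2 + (sinh U)^2 * b^2)"
    using q by (simp add: abs_divide)
  have "U powr al * sinh U * (sinh U * \<bar>b\<bar>) \<le> U powr al * sinh U * sqrt (a^2 + (sinh U)^2 * b^2)"
    using r p s by (intro mult_left_mono) auto
  then show "\<bar>U powr al * (sinh U)^2 * b / sqrt (a^2 + (sinh U)^2 * b^2)\<bar> \<le> gg al U"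
    unfolding ad num gg_def using q by (simp add: divide_le_eq)
  assume a0: "a = 0"
  have "sinh U * \<bar>b\<bar> = sqrt (a^2 + (sinh U)^2 * b^2)" using s a0 by (simp add: real_sqrt_mult)
  then show "\<bar>U powr al * (sinh U)^2 * b / sqrt (a^2 + (sinh U)^2 * b^2)\<bar> = gg al U"
    unfolding ad num gg_def using q by simp
qed

theorem theorem2p7:
  fixes \<alpha> :: real and u v u' v' u'' v'' :: "real \<Rightarrow> real"
  assumes "\<alpha> \<noteq> 0"
    and "regular_polar_curve u v u' v' u'' v''"
    and "closed_polar_curve u v"
    and "alpha_stationary \<alpha> u v u' v'"
  shows "\<exists>r>0. \<forall>t. u t = r"
proof -
  have du: "\<And>t. (u has_real_derivative u' t) (at t)" and up: "\<And>t. u t > 0"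
    and spp: "\<And>t. speed2 u u' v' t > 0"
    using assms(2) unfolding regular_polar_curve_def by auto
  obtain T where T: "T > 0" "\<And>t. Psi (u (t + T)) (v (t + T)) = Psi (u t) (v t)"
    using assms(3) unfolding closed_polar_curve_def by blast
  have per: "\<And>t. u (t + T) = u t"
  proof -
    fix t
    have "cosh (u (t + T)) = cosh (u t)" using T(2)[of t] by (simp add: Psi_def)
    then show "u (t + T) = u t"
      using cosh_real_nonneg_le_iff[of "u (t+T)" "u t"] cosh_real_nonneg_le_iff[of "u t" "u (t+T)"]
        up[of t] up[of "t+T"] by auto
  qed
  have pern: "u (t + real n * T) = u t" for n :: nat and t
  proof (induction n arbitrary: t)
    case 0 then show ?case by simp
  next
    case (Suc n)
    have "u (t + real (Suc n) * T) = u ((t + real n * T) + T)" by (simp add: algebra_simps)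
    also have "\<dots> = u t" using per Suc by simp
    finally show ?case .
  qed
  have red: "\<exists>s'. 0 \<le> s' \<and> s' \<le> T \<and> u s = u s'" for s
  proof -
    define m where "m = floor (s / T)"
    define s' where "s' = s - real_of_int m * T"
    have "real_of_int m \<le> s / T" "s / T < real_of_int m + 1" unfolding m_def by linarith+
    then have b: "real_of_int m * T \<le> s" "s < (real_of_int m + 1) * T" using T(1)
      by (simp_all add: field_simps)
    have s'r: "0 \<le> s'" "s' \<le> T" using b unfolding s'_def by (simp_all add: algebra_simps)
    have "u s = u s'"
    proof (cases "m \<ge> 0")
      case True
      then have "s = s' + real (nat m) * T" unfolding s'_def by simp
      then show ?thesis using pern by metis
    next
      case False
      then have "s' = s + real (nat (- m)) * T" unfolding s'_def by simp
      then show ?thesis using pern by metis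
    qed
    then show ?thesis using s'r by blast
  qed
  have cont: "continuous_on {0..T} u"
    using du by (intro continuous_at_imp_continuous_on) (auto intro: DERIV_isCont)
  obtain tM where tM: "tM \<in> {0..T}" "\<And>y. y \<in> {0..T} \<Longrightarrow> u y \<le> u tM"
    using continuous_attains_sup[OF compact_Icc _ cont] T(1) by auto
  obtain tm where tm: "tm \<in> {0..T}" "\<And>y. y \<in> {0..T} \<Longrightarrow> u tm \<le> u y"
    using continuous_attains_inf[OF compact_Icc _ cont] T(1) by auto
  have gM: "u s \<le> u tM" for s using red[of s] tM by auto
  have gm: "u tm \<le> u s" for s using red[of s] tm by auto
  have u'M: "u' tM = 0" by (rule DERIV_local_max[OF du zero_less_one]) (use gM in auto)
  have u'm: "u' tm = 0" by (rule DERIV_local_min[OF du zero_less_one]) (use gm in auto)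
  define C where "C s = u s powr \<alpha> * (sinh (u s))^2 * v' s / sqrt (speed2 u u' v' s)" for s
  have Cc: "C s = C s'" for s s'
  proof -
    have "\<forall>x. (C has_real_derivative 0) (at x)"
      using assms(4) unfolding alpha_stationary_def C_def[abs_def] by simp
    then show ?thesis by (rule DERIV_isconst_all)
  qed
  have Cb: "\<bar>C s\<bar> \<le> gg \<alpha> (u s)" for s
    using C_bound(1)[OF up[of s], of "u' s" "v' s" \<alpha>] spp[of s] unfolding C_def speed2_def by simp
  have CM: "\<bar>C tM\<bar> = gg \<alpha> (u tM)"
    using C_bound(2)[OF up[of tM], of "u' tM" "v' tM" \<alpha>] spp[of tM] u'M unfolding C_def speed2_def by simp
  have Cm: "\<bar>C tm\<bar> = gg \<alpha> (u tm)"
    using C_bound(2)[OF up[of tm], of "u' tm" "v' tm" \<alpha>] spp[of tm] u'm unfolding C_def speed2_def by simp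
  show ?thesis
  proof (cases "u tm = u tM")
    case True
    then have "\<forall>t. u t = u tm" using gm gM by (metis order_antisym)
    then show ?thesis using up by blast
  next
    case False
    then have lt: "u tm < u tM" using gm[of tM] by simp
    have geq: "gg \<alpha> (u tm) = gg \<alpha> (u tM)" using CM Cm Cc by metis
    obtain x where x: "u tm < x" "x < u tM" "gg \<alpha> x < gg \<alpha> (u tm)"
      using gg_shape[OF up lt geq] by blast
    have ic: "\<And>t. isCont u t" using du by (blast intro: DERIV_isCont)
    obtain t0 where t0: "u t0 = x"
    proof (cases "tm \<le> tM")
      case True
      then show ?thesis using IVT[of u tm x tM] x ic that by force
    next
      case False
      then show ?thesis using IVT2[of u tm x tM] x ic that by force
    qed
    have "gg \<alpha> (u tm) = \<bar>C t0\<bar>" using Cm Cc by metis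
    also have "\<dots> \<le> gg \<alpha> x" using Cb[of t0] t0 by simp
    finally show ?thesis using x(3) by simp
  qed
qed

end
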